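(* Let $\Gamma=(\gamma_{ij})\in(\mathcal{K}_\infty\cup\{0\})^{N\times N}$ be irreducible, $\mu=(\mu_1,\dots,\mu_N)$ with $\mu_i$ monotone aggregation functions, and $\Gamma_\mu$ the induced operator. Let $\kappa_0>0$, $\kappa_\Gamma>\kappa_h>0$, $\delta>0$, let $\phi$ be as in the context, and let $c\in\mathbb{R}^N$ with $c\gg0$ and $\|c\|<\kappa_\Gamma/2$. Let $\tau=\langle y^1,\dots,y^{N+1}\rangle$, $y^j=(v^j,t_j)$, $y^1<\dots<y^{N+1}$, be an $N$-simplex of $\tilde K_1(\delta)$ lying on the boundary of the positive orthant, i.e. $v^j\in\mathbb{R}^N_+$ for all $j$ and there is an index $i^*$ with $v^j_{i^*}=0$ for all $j=1,\dots,N+1$. If $\|v^{N+1}\|<\kappa_0+\kappa_\Gamma$, then $\tau$ is not complete.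
   Context: Order on $\mathbb{R}^N$: $v\ge w$ iff $v_i\ge w_i$ for all $i$; $v>w$ iff $v\ge w$, $v\ne w$; $v\gg w$ iff $v_i>w_i$ for all $i$. $\|\cdot\|$ Euclidean norm, $e=(1,\dots,1)^\top$. $\mathcal{K}_\infty$: continuous, strictly increasing, unbounded $\gamma:\mathbb{R}_+\to\mathbb{R}_+$ with $\gamma(0)=0$; $0$ denotes the zero function. A monotone aggregation function is a continuous $\mu_i:\mathbb{R}^N_+\to\mathbb{R}_+$ with $\mu_i(s)=0$ iff $s=0$, $\mu_i(s)<\mu_i(t)$ whenever $s\ll t$, and $\mu_i(s)\to\infty$ as $\|s\|\to\infty$. The induced operator is $\Gamma_\mu(s)_i=\mu_i(\gamma_{i1}(s_1),\dots,\gamma_{iN}(s_N))$; it is monotone with $\Gamma_\mu(0)=0$. $\Gamma$ is irreducible if the $0$-$1$ matrix $A$ with $a_{ij}=1$ iff $\gamma_{ij}\not\equiv0$ is irreducible (equivalently the directed graph with an edge $j\to i$ iff $\gamma_{ij}\not\equiv 0$ is strongly connected). Given $\kappa_0>0$, $\kappa_\Gamma>\kappa_h>0$, $\phi(v)=\Gamma_\mu(v)\big(1+\min\{0,\frac{\kappa_\Gamma-2\|v\|}{\|v\|+\kappa_0}\}\big)+\max\{0,\kappa_h-2\|v\|\}e$ for $v\in\mathbb{R}^N_+$. Triangulation $\tilde K_1(\delta)$: with $P=\mathrm{diag}(\delta,\dots,\delta,1)$, its $(N+1)$-simplices are $\langle y^1,\dots,y^{N+2}\rangle$ with $y^1=(\delta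 z,0)$, $z\in\mathbb{Z}^N$, $y^{i+1}=y^i+Pe_{\pi(i)}$ for a permutation $\pi$ of $\{1,\dots,N+1\}$; all vertices lie in $\mathbb{R}^N\times\{0,1\}$ and are componentwise increasing. Its $N$-simplices are the facets of these. Homotopy $\vartheta(v,t)=(1-t)c+t\phi(v)$; labeling $l(v,t)=\vartheta(v,t)-v$. Labeling matrix $L(\tau)$: $(N+1)\times(N+1)$ with $j$-th column $(1,l(y^j)^\top)^\top$. $W\succ0$ (lexicographically positive) means the first nonzero entry of each row of $W$ is positive. $\tau$ is complete if $L(\tau)W=I_{N+1}$ has a solution $W\succ0$. *)

theory Defs
  imports Complex_Main
begin

text \<open>Vectors in R^N are represented as functions nat => real; only the
components with index i < N are relevant (index i here = index i+1 of the paper).\<close>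

definition enorm :: "nat \<Rightarrow> (nat \<Rightarrow> real) \<Rightarrow> real" where
  "enorm N v = sqrt (\<Sum>i<N. (v i)\<^sup>2)"

definition orthant :: "nat \<Rightarrow> (nat \<Rightarrow> real) set" where
  "orthant N = {s. (\<forall>i<N. 0 \<le> s i) \<and> (\<forall>i. N \<le> i \<longrightarrow> s i = 0)}"

definition K_inf :: "(real \<Rightarrow> real) \<Rightarrow> bool" where
  "K_inf g \<longleftrightarrow> continuous_on {0..} g \<and> strict_mono_on {0..} g \<and> g 0 = 0
     \<and> (\<forall>x\<ge>0. 0 \<le> g x) \<and> (\<forall>M. \<exists>x\<ge>0. M < g x)"

definition zero_fun :: "(real \<Rightarrow> real) \<Rightarrow> bool" where
  "zero_fun g \<longleftrightarrow> (\<forall>x\<ge>0. g x = 0)"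

definition MAF :: "nat \<Rightarrow> ((nat \<Rightarrow> real) \<Rightarrow> real) \<Rightarrow> bool" where
  "MAF N m \<longleftrightarrow>
     (\<forall>s\<in>orthant N. \<forall>e>0. \<exists>d>0. \<forall>t\<in>orthant N.
         (\<forall>i<N. \<bar>t i - s i\<bar> < d) \<longrightarrow> \<bar>m t - m s\<bar> < e)
   \<and> (\<forall>s\<in>orthant N. 0 \<le> m s)
   \<and> (\<forall>s\<in>orthant N. m s = 0 \<longleftrightarrow> (\<forall>i<N. s i = 0))
   \<and> (\<forall>s\<in>orthant N. \<forall>t\<in>orthant N. (\<forall>i<N. s i < t i) \<longrightarrow> m s < m t)
   \<and> (\<forall>M. \<exists>R. \<forall>s\<in>orthant N. R < enorm N s \<longrightarrow> M < m s)"

text \<open>Irreducibility: the digraph on {0..<N} with an edge j -> i iff gamma i j is not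
the zero function is strongly connected.\<close>
definition irreducible_gains :: "nat \<Rightarrow> (nat \<Rightarrow> nat \<Rightarrow> real \<Rightarrow> real) \<Rightarrow> bool" where
  "irreducible_gains N \<gamma> \<longleftrightarrow>
     (\<forall>i<N. \<forall>j<N. (j, i) \<in> {(a, b). a < N \<and> b < N \<and> \<not> zero_fun (\<gamma> b a)}\<^sup>*)"

definition Gamma_mu :: "nat \<Rightarrow> (nat \<Rightarrow> nat \<Rightarrow> real \<Rightarrow> real) \<Rightarrow> (nat \<Rightarrow> (nat \<Rightarrow> real) \<Rightarrow> real)
     \<Rightarrow> (nat \<Rightarrow> real) \<Rightarrow> (nat \<Rightarrow> real)" where
  "Gamma_mu N \<gamma> \<mu> s = (\<lambda>i. if i < N then \<mu> i (\<lambda>j. if j < N then \<gamma> i j (s j) else 0) else 0)"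

definition phi :: "nat \<Rightarrow> (nat \<Rightarrow> nat \<Rightarrow> real \<Rightarrow> real) \<Rightarrow> (nat \<Rightarrow> (nat \<Rightarrow> real) \<Rightarrow> real)
     \<Rightarrow> real \<Rightarrow> real \<Rightarrow> real \<Rightarrow> (nat \<Rightarrow> real) \<Rightarrow> (nat \<Rightarrow> real)" where
  "phi N \<gamma> \<mu> k0 kG kh v = (\<lambda>i. if i < N then
      Gamma_mu N \<gamma> \<mu> v i * (1 + min 0 ((kG - 2 * enorm N v) / (enorm N v + k0)))
      + max 0 (kh - 2 * enorm N v) else 0)"

text \<open>Vertices of the (N+1)-simplex of the triangulation K1-tilde(delta) with base
point (delta z, 0) and permutation p of {0..N} (coordinate N is the t-coordinate):
vertex k (k = 0..N+1) equals y^1 + sum_{m<k} P e_{p m}.\<close>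
definition K1_vertex :: "nat \<Rightarrow> real \<Rightarrow> (nat \<Rightarrow> int) \<Rightarrow> (nat \<Rightarrow> nat) \<Rightarrow> nat
     \<Rightarrow> (nat \<Rightarrow> real) \<times> real" where
  "K1_vertex N \<delta> z p k =
     ((\<lambda>j. if j < N then \<delta> * of_int (z j) + (if j \<in> p ` {..<k} then \<delta> else 0) else 0),
      (if N \<in> p ` {..<k} then 1 else 0))"

text \<open>y (indexed 0..N) lists, in increasing order, the vertices of an N-simplex of
K1-tilde(delta), i.e. of a facet of one of its (N+1)-simplices.\<close>
definition is_K1_N_simplex :: "nat \<Rightarrow> real \<Rightarrow> (nat \<Rightarrow> (nat \<Rightarrow> real) \<times> real) \<Rightarrow> bool" where
  "is_K1_N_simplex N \<delta> y \<longleftrightarrow>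
     (\<exists>z p r. bij_betw p {..N} {..N} \<and> r \<le> Suc N \<and>
        (\<forall>j\<le>N. y j = K1_vertex N \<delta> z p (if j < r then j else Suc j)))"

definition label :: "nat \<Rightarrow> (nat \<Rightarrow> real) \<Rightarrow> ((nat \<Rightarrow> real) \<Rightarrow> (nat \<Rightarrow> real))
     \<Rightarrow> (nat \<Rightarrow> real) \<times> real \<Rightarrow> (nat \<Rightarrow> real)" where
  "label N c f y = (\<lambda>i. if i < N then (1 - snd y) * c i + snd y * f (fst y) i - fst y i else 0)"

definition label_matrix :: "nat \<Rightarrow> (nat \<Rightarrow> real) \<Rightarrow> ((nat \<Rightarrow> real) \<Rightarrow> (nat \<Rightarrow> real))
     \<Rightarrow> (nat \<Rightarrow> (nat \<Rightarrow> real) \<times> real) \<Rightarrow> nat \<Rightarrow> nat \<Rightarrow> real" where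
  "label_matrix N c f y r j = (if r = 0 then 1 else label N c f (y j) (r - 1))"

definition lex_pos :: "nat \<Rightarrow> (nat \<Rightarrow> nat \<Rightarrow> real) \<Rightarrow> bool" where
  "lex_pos n W \<longleftrightarrow> (\<forall>r<n. \<exists>k<n. 0 < W r k \<and> (\<forall>k'<k. W r k' = 0))"

definition complete :: "nat \<Rightarrow> (nat \<Rightarrow> real) \<Rightarrow> ((nat \<Rightarrow> real) \<Rightarrow> (nat \<Rightarrow> real))
     \<Rightarrow> (nat \<Rightarrow> (nat \<Rightarrow> real) \<times> real) \<Rightarrow> bool" where
  "complete N c f y \<longleftrightarrow> (\<exists>W. lex_pos (Suc N) W \<and>
     (\<forall>r\<le>N. \<forall>q\<le>N. (\<Sum>k\<le>N. label_matrix N c f y r k * W k q) = (if r = q then 1 else 0)))"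

end

theory Submission
  imports Defs
begin

lemma enorm_nonneg: "0 \<le> enorm N v"
  unfolding enorm_def by (simp add: sum_nonneg)

lemma enorm_zero: "(\<forall>i<N. v i = 0) \<Longrightarrow> enorm N v = 0"
  unfolding enorm_def by simp

lemma enorm_mono:
  assumes "\<forall>i<N. 0 \<le> u i" "\<forall>i<N. u i \<le> v i"
  shows "enorm N u \<le> enorm N v"
proof -
  have "(\<Sum>i<N. (u i)\<^sup>2) \<le> (\<Sum>i<N. (v i)\<^sup>2)"
    by (rule sum_mono) (use assms in \<open>auto intro: power_mono\<close>)
  then show ?thesis unfolding enorm_def by simp
qed

lemma simplex_props:
  assumes "is_K1_N_simplex N \<delta> y" "0 < \<delta>"
  shows "\<forall>k\<le>N. snd (y k) = 0 \<or> snd (y k) = 1"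
    and "\<forall>k k' i. k \<le> k' \<longrightarrow> k' \<le> N \<longrightarrow> i < N \<longrightarrow> fst (y k) i \<le> fst (y k') i"
proof -
  obtain z p r where yv: "\<forall>j\<le>N. y j = K1_vertex N \<delta> z p (if j < r then j else Suc j)"
    using assms(1) unfolding is_K1_N_simplex_def by blast
  show "\<forall>k\<le>N. snd (y k) = 0 \<or> snd (y k) = 1"
    using yv by (simp add: K1_vertex_def)
  show "\<forall>k k' i. k \<le> k' \<longrightarrow> k' \<le> N \<longrightarrow> i < N \<longrightarrow> fst (y k) i \<le> fst (y k') i"
  proof (intro allI impI)
    fix k k' i assume h: "k \<le> k'" "k' \<le> N" "i < N"
    define a where "a = (if k < r then k else Suc k)"
    define b where "b = (if k' < r then k' else Suc k')"
    have ab: "a \<le> b" using h unfolding a_def b_def by auto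
    have sub: "p ` {..<a} \<subseteq> p ` {..<b}" using ab by auto
    have "y k = K1_vertex N \<delta> z p a" "y k' = K1_vertex N \<delta> z p b"
      using yv h unfolding a_def b_def by auto
    then show "fst (y k) i \<le> fst (y k') i"
      using h sub assms(2) by (auto simp: K1_vertex_def)
  qed
qed

lemma gamma_arg_orthant:
  assumes gains: "\<forall>i<N. \<forall>j<N. K_inf (\<gamma> i j) \<or> zero_fun (\<gamma> i j)"
    and jN: "j < N" and vnn: "\<forall>i<N. 0 \<le> v i"
  shows "(\<lambda>l. if l < N then \<gamma> j l (v l) else 0) \<in> orthant N"
proof -
  have "0 \<le> \<gamma> j l (v l)" if "l < N" for l
  proof -
    have "0 \<le> v l" using vnn that by blast
    moreover have "K_inf (\<gamma> j l) \<or> zero_fun (\<gamma> j l)" using gains jN that by blast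
    ultimately show ?thesis unfolding K_inf_def zero_fun_def by auto
  qed
  then show ?thesis unfolding orthant_def by auto
qed

lemma Gamma_nonneg:
  assumes gains: "\<forall>i<N. \<forall>j<N. K_inf (\<gamma> i j) \<or> zero_fun (\<gamma> i j)"
    and maf: "\<forall>i<N. MAF N (\<mu> i)"
    and jN: "j < N" and vnn: "\<forall>i<N. 0 \<le> v i"
  shows "0 \<le> Gamma_mu N \<gamma> \<mu> v j"
  using gamma_arg_orthant[OF gains jN vnn] maf jN
  unfolding Gamma_mu_def MAF_def by auto

lemma factor_pos:
  fixes k0 kG n :: real
  assumes "0 < k0" "0 \<le> n" "n < k0 + kG"
  shows "0 < 1 + min 0 ((kG - 2 * n) / (n + k0))"
proof (cases "kG - 2 * n \<ge> 0")
  case True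
  then have "(kG - 2 * n) / (n + k0) \<ge> 0" using assms by simp
  then show ?thesis by simp
next
  case False
  have "1 + (kG - 2 * n) / (n + k0) = (kG + k0 - n) / (n + k0)"
    using assms by (simp add: field_simps)
  also have "\<dots> > 0" using assms by simp
  finally show ?thesis by linarith
qed

lemma phi_props:
  assumes gains: "\<forall>i<N. \<forall>j<N. K_inf (\<gamma> i j) \<or> zero_fun (\<gamma> i j)"
    and maf: "\<forall>i<N. MAF N (\<mu> i)"
    and k0: "0 < k0"
    and jN: "j < N" and vnn: "\<forall>i<N. 0 \<le> v i"
    and nv: "enorm N v < k0 + kG"
  shows "0 \<le> phi N \<gamma> \<mu> k0 kG kh v j"
    and "phi N \<gamma> \<mu> k0 kG kh v j = 0 \<Longrightarrow> Gamma_mu N \<gamma> \<mu> v j = 0 \<and> kh \<le> 2 * enorm N v"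
proof -
  define F where "F = 1 + min 0 ((kG - 2 * enorm N v) / (enorm N v + k0))"
  have F: "0 < F" unfolding F_def using factor_pos[OF k0 enorm_nonneg nv] .
  have G: "0 \<le> Gamma_mu N \<gamma> \<mu> v j" by (rule Gamma_nonneg[OF gains maf jN vnn])
  have ph: "phi N \<gamma> \<mu> k0 kG kh v j = Gamma_mu N \<gamma> \<mu> v j * F + max 0 (kh - 2 * enorm N v)"
    unfolding phi_def F_def using jN by simp
  have GF: "0 \<le> Gamma_mu N \<gamma> \<mu> v j * F" using G F by simp
  show "0 \<le> phi N \<gamma> \<mu> k0 kG kh v j" using ph GF by linarith
  assume "phi N \<gamma> \<mu> k0 kG kh v j = 0"
  then have "Gamma_mu N \<gamma> \<mu> v j * F = 0" "max 0 (kh - 2 * enorm N v) = 0"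
    using ph GF by linarith+
  then show "Gamma_mu N \<gamma> \<mu> v j = 0 \<and> kh \<le> 2 * enorm N v" using F by auto
qed

theorem mainTheorem4:
  fixes N :: nat and \<gamma> :: "nat \<Rightarrow> nat \<Rightarrow> real \<Rightarrow> real"
    and \<mu> :: "nat \<Rightarrow> (nat \<Rightarrow> real) \<Rightarrow> real"
    and k0 kG kh \<delta> :: real and c :: "nat \<Rightarrow> real"
    and y :: "nat \<Rightarrow> (nat \<Rightarrow> real) \<times> real" and istar :: nat
  assumes gains: "\<forall>i<N. \<forall>j<N. K_inf (\<gamma> i j) \<or> zero_fun (\<gamma> i j)"
    and irr: "irreducible_gains N \<gamma>"
    and maf: "\<forall>i<N. MAF N (\<mu> i)"
    and k0: "0 < k0" and kh: "0 < kh" and khG: "kh < kG" and delta: "0 < \<delta>"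
    and c_pos: "\<forall>i<N. 0 < c i"
    and c_norm: "enorm N c < kG / 2"
    and simplex: "is_K1_N_simplex N \<delta> y"
    and nonneg: "\<forall>j\<le>N. \<forall>i<N. 0 \<le> fst (y j) i"
    and istar: "istar < N" and bdry: "\<forall>j\<le>N. fst (y j) istar = 0"
    and small: "enorm N (fst (y N)) < k0 + kG"
  shows "\<not> complete N c (phi N \<gamma> \<mu> k0 kG kh) y"
proof
  define f where "f = phi N \<gamma> \<mu> k0 kG kh"
  assume "complete N c (phi N \<gamma> \<mu> k0 kG kh) y"
  then obtain W where lp: "lex_pos (Suc N) W" and
    eq: "\<forall>r\<le>N. \<forall>q\<le>N. (\<Sum>k\<le>N. label_matrix N c f y r k * W k q) = (if r = q then 1 else 0)"
    unfolding complete_def f_def by blast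
  define w where "w k = W k 0" for k
  have t01: "\<forall>k\<le>N. snd (y k) = 0 \<or> snd (y k) = 1"
    and mono: "\<forall>k k' i. k \<le> k' \<longrightarrow> k' \<le> N \<longrightarrow> i < N \<longrightarrow> fst (y k) i \<le> fst (y k') i"
    using simplex_props[OF simplex delta] by blast+
  have normk: "enorm N (fst (y k)) < k0 + kG" if "k \<le> N" for k
  proof -
    have "enorm N (fst (y k)) \<le> enorm N (fst (y N))"
      by (rule enorm_mono) (use that nonneg mono in auto)
    then show ?thesis using small by linarith
  qed
  have wnn: "0 \<le> w k" if kN: "k \<le> N" for k
  proof -
    obtain kk where "kk < Suc N" "0 < W k kk" "\<forall>k'<kk. W k k' = 0"
      using lp kN unfolding lex_pos_def by (meson less_Suc_eq_le)
    then show ?thesis unfolding w_def by (cases kk) auto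
  qed
  have sum1: "(\<Sum>k\<le>N. w k) = 1"
    using eq[rule_format, of 0 0] by (simp add: label_matrix_def w_def)
  have sumj: "(\<Sum>k\<le>N. label N c f (y k) j * w k) = 0" if "j < N" for j
    using eq[rule_format, of "Suc j" 0] that by (simp add: label_matrix_def w_def)
  define T where "T = {k. k \<le> N \<and> 0 < w k}"
  have finT: "finite T" unfolding T_def by simp
  have Tne: "T \<noteq> {}"
  proof
    assume "T = {}"
    then have "\<forall>k\<le>N. w k = 0" using wnn unfolding T_def by force
    then show False using sum1 by simp
  qed
  define m where "m = Max T"
  have mT: "m \<in> T" unfolding m_def using finT Tne by simp
  have mmax: "\<And>k. k \<in> T \<Longrightarrow> k \<le> m" unfolding m_def using finT by simp
  have mN: "m \<le> N" and wm: "0 < w m" using mT unfolding T_def by auto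
  have lab0: "label N c f (y m) j = 0" if jN: "j < N" and vz: "fst (y m) j = 0" for j
  proof -
    have nn: "\<forall>k\<in>{..N}. 0 \<le> label N c f (y k) j * w k"
    proof
      fix k assume "k \<in> {..N}"
      then have kN: "k \<le> N" by simp
      show "0 \<le> label N c f (y k) j * w k"
      proof (cases "w k = 0")
        case False
        then have "k \<in> T" using wnn kN unfolding T_def by force
        then have "k \<le> m" by (rule mmax)
        then have "fst (y k) j \<le> 0" using mono mN jN vz by metis
        then have vk: "fst (y k) j = 0" using nonneg kN jN by force
        have "0 \<le> f (fst (y k)) j"
          unfolding f_def by (rule phi_props(1)[OF gains maf k0 jN]) (use nonneg kN normk in auto)
        moreover have "snd (y k) = 0 \<or> snd (y k) = 1" using t01 kN by blast
        moreover have "0 < c j" using c_pos jN by blast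
        ultimately have "0 \<le> label N c f (y k) j"
          using vk jN unfolding label_def by auto
        then show ?thesis using wnn kN by simp
      qed simp
    qed
    have "\<forall>k\<in>{..N}. label N c f (y k) j * w k = 0"
      using sum_nonneg_eq_0_iff[of "{..N}" "\<lambda>k. label N c f (y k) j * w k"] nn sumj[OF jN] by simp
    then show ?thesis using mN wm by auto
  qed
  have tm: "snd (y m) = 1"
  proof (rule ccontr)
    assume "snd (y m) \<noteq> 1"
    then have "snd (y m) = 0" using t01 mN by auto
    then have "label N c f (y m) istar = c istar" using bdry mN istar unfolding label_def by simp
    moreover have "label N c f (y m) istar = 0" using lab0[OF istar] bdry mN by blast
    moreover have "0 < c istar" using c_pos istar by blast
    ultimately show False by simp
  qed
  have phi0: "Gamma_mu N \<gamma> \<mu> (fst (y m)) j = 0 \<and> kh \<le> 2 * enorm N (fst (y m))"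
    if jN: "j < N" and vz: "fst (y m) j = 0" for j
  proof -
    have "f (fst (y m)) j = 0" using lab0[OF jN vz] tm vz jN unfolding label_def by simp
    then show ?thesis unfolding f_def
      by (intro phi_props(2)[OF gains maf k0 jN]) (use nonneg mN normk in auto)
  qed
  have "enorm N (fst (y m)) \<noteq> 0" using phi0[OF istar] bdry mN kh by auto
  then obtain l0 where l0: "l0 < N" "fst (y m) l0 \<noteq> 0" using enorm_zero by blast
  have noedge: "zero_fun (\<gamma> b a)"
    if aN: "a < N" and bN: "b < N" and va: "fst (y m) a \<noteq> 0" and vb: "fst (y m) b = 0" for a b
  proof -
    let ?s = "\<lambda>l. if l < N then \<gamma> b l (fst (y m) l) else 0"
    have vnn: "\<forall>i<N. 0 \<le> fst (y m) i" using nonneg mN by auto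
    have so: "?s \<in> orthant N" by (rule gamma_arg_orthant[OF gains bN vnn])
    have h0: "\<mu> b ?s = 0" using phi0[OF bN vb] bN unfolding Gamma_mu_def by simp
    have "MAF N (\<mu> b)" using maf bN by blast
    then have z: "\<forall>s\<in>orthant N. (\<mu> b s = 0) = (\<forall>i<N. s i = 0)" unfolding MAF_def by blast
    have "\<forall>l<N. ?s l = 0" using z[rule_format, OF so, THEN iffD1, OF h0] .
    then have g0: "\<gamma> b a (fst (y m) a) = 0" using aN by auto
    have pos: "0 < fst (y m) a" using vnn aN va by force
    show ?thesis
    proof (rule ccontr)
      assume "\<not> zero_fun (\<gamma> b a)"
      then have "K_inf (\<gamma> b a)" using gains aN bN by blast
      then have "\<gamma> b a 0 < \<gamma> b a (fst (y m) a)" "\<gamma> b a 0 = 0"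
        using pos unfolding K_inf_def strict_mono_on_def by (metis atLeast_iff order_refl less_imp_le)+
      then show False using g0 by simp
    qed
  qed
  have path: "(l0, istar) \<in> {(a, b). a < N \<and> b < N \<and> \<not> zero_fun (\<gamma> b a)}\<^sup>*"
    using irr l0 istar unfolding irreducible_gains_def by blast
  have "fst (y m) istar \<noteq> 0"
    using path
  proof (induction rule: rtrancl_induct)
    case base then show ?case using l0 by simp
  next
    case (step b c)
    then show ?case using noedge by blast
  qed
  then show False using bdry mN by simp
qed

end
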